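(* Let $S \subseteq \mathbb{R}^n$ be nonempty, closed and convex, let $F = (F_1,\dots,F_m)^\top \colon S \to \mathbb{R}^m$ with each $F_i$ continuous and convex, and let $\ell > 0$. Define \[ u_\ell(x) := \max_{y \in S} \min_{i = 1,\dots,m} \left\{F_i(x) - F_i(y) - \frac{\ell}{2}\|x - y\|^2\right\}, \qquad U_\ell(x) := \operatorname*{argmax}_{y \in S} \min_{i = 1,\dots,m} \left\{F_i(x) - F_i(y) - \frac{\ell}{2}\|x - y\|^2\right\} \] for $x \in S$ (the maximizer is unique, so $U_\ell \colon S \to S$). Then $u_\ell$ and $U_\ell$ are continuous on $S$.
   Context: $\|\cdot\|$ is the Euclidean norm. *)

theory Defs
  imports "HOL-Analysis.Analysis"
begin

definition phi :: "real \<Rightarrow> (nat \<Rightarrow> real^'n \<Rightarrow> real) \<Rightarrow> nat \<Rightarrow> real^'n \<Rightarrow> real^'n \<Rightarrow> real" where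
  "phi l F m x y = Min ((\<lambda>i. F i x - F i y - (l / 2) * (norm (x - y))^2) ` {1..m})"

text \<open>u_l(x) = max over y in S of phi (the max is attained, so it equals the supremum).\<close>
definition u_fun :: "real \<Rightarrow> (nat \<Rightarrow> real^'n \<Rightarrow> real) \<Rightarrow> nat \<Rightarrow> (real^'n) set \<Rightarrow> real^'n \<Rightarrow> real" where
  "u_fun l F m S x = (SUP y\<in>S. phi l F m x y)"

definition U_fun :: "real \<Rightarrow> (nat \<Rightarrow> real^'n \<Rightarrow> real) \<Rightarrow> nat \<Rightarrow> (real^'n) set \<Rightarrow> real^'n \<Rightarrow> real^'n" where
  "U_fun l F m S x = (THE y. y \<in> S \<and> (\<forall>z\<in>S. phi l F m x z \<le> phi l F m x y))"

end

theory Submission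
  imports Defs
begin

lemma cont_Min_fin:
  fixes f :: "nat \<Rightarrow> 'a::topological_space \<Rightarrow> real"
  assumes "finite I" "I \<noteq> {}" "\<And>i. i \<in> I \<Longrightarrow> continuous_on S (f i)"
  shows "continuous_on S (\<lambda>x. Min ((\<lambda>i. f i x) ` I))"
  using assms
proof (induction I rule: finite_ne_induct)
  case (singleton i)
  then show ?case by simp
next
  case (insert a A)
  have "continuous_on S (\<lambda>x. min (f a x) (Min ((\<lambda>i. f i x) ` A)))"
    using insert by (intro continuous_on_min) auto
  moreover have "\<And>x. Min ((\<lambda>i. f i x) ` insert a A) = min (f a x) (Min ((\<lambda>i. f i x) ` A))"
    using insert by (simp add: Min_insert)
  ultimately show ?case by simp
qed

lemma Min_le_shift:
  fixes f g :: "nat \<Rightarrow> real"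
  assumes "finite I" "I \<noteq> {}" "\<And>i. i \<in> I \<Longrightarrow> f i \<le> g i + c"
  shows "Min (f ` I) \<le> Min (g ` I) + c"
proof -
  obtain j where j: "j \<in> I" "g j = Min (g ` I)"
  proof -
    have "Min (g ` I) \<in> g ` I" using assms by (intro Min_in) auto
    then show ?thesis using that by auto
  qed
  have "Min (f ` I) \<le> f j" using j assms by simp
  also have "\<dots> \<le> g j + c" using assms(3)[OF j(1)] .
  finally show ?thesis using j by simp
qed

lemma arith1: "pa \<le> Fx - Fa - l / 2 * A \<Longrightarrow> pb \<le> Fx - Fb - l/2*B \<Longrightarrow> Fc \<le> (Fa+Fb)/2 \<Longrightarrow>
 (pa + pb) / 2 + l / 8 * C \<le> Fx - Fc - l / 2 * ((A + B) / 2 - C / 4)" for l::real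
  by (simp add: field_simps)

lemma arith2: "pm \<le> py \<Longrightarrow> (py + pz)/2 + l/8 * C \<le> pm \<Longrightarrow> pz + l/4*C \<le> (py::real)"
  by (simp add: field_simps)

lemma arith3: "a + l/4*DD \<le> b \<Longrightarrow> c + l/4*DD \<le> d \<Longrightarrow> d \<le> a + et + l/2*(N1 - N2)
  \<Longrightarrow> b \<le> c + et + l/2*(N3 - N4) \<Longrightarrow> N1 - N2 + N3 - N4 = 2 * I \<Longrightarrow> I \<le> en * D \<Longrightarrow> l > 0
  \<Longrightarrow> DD = D^2 \<Longrightarrow> l/2 * D^2 \<le> 2 * et + l * (en * D)" for l :: real
proof -
  assume h: "a + l/4*DD \<le> b" "c + l/4*DD \<le> d" "d \<le> a + et + l/2*(N1 - N2)"
    "b \<le> c + et + l/2*(N3 - N4)" "N1 - N2 + N3 - N4 = 2 * I" "I \<le> en * D" "l > 0" "DD = D^2"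
  have "l * I \<le> l * (en * D)" using h by (intro mult_left_mono) auto
  moreover have "l/2*(N1-N2) + l/2*(N3-N4) = l*I"
  proof -
    have "l/2*(N1-N2) + l/2*(N3-N4) = l/2*(N1 - N2 + N3 - N4)" by (simp add: right_diff_distrib distrib_left)
    also have "\<dots> = l * I" using h(5) by simp
    finally show ?thesis .
  qed
  moreover have "l/4*DD + l/4*DD = l/2 * D^2" using h(8) by simp
  ultimately show ?thesis using h(1-4) by linarith
qed
lemma arith4: "l > 0 \<Longrightarrow> e > 0 \<Longrightarrow> 0 \<le> en \<Longrightarrow> en < e/3 \<Longrightarrow> 0 \<le> D \<Longrightarrow>
  l/2*D^2 \<le> 2*(l*e^2/32) + l*(en*D) \<Longrightarrow> D < e" for l::real
proof -
  assume h: "l > 0" "e > 0" "0 \<le> en" "en < e/3" "0 \<le> D" "l/2*D^2 \<le> 2*(l*e^2/32) + l*(en*D)"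
  have "l * (D^2/2) \<le> l * (e^2/16 + en*D)" using h(6) by (simp add: algebra_simps)
  then have "D^2/2 \<le> e^2/16 + en*D" using h(1) mult_le_cancel_left_pos by blast
  moreover have "en * D \<le> en^2 + D^2/4" using sum_squares_ge_zero[of "en - D/2" 0]
    by (simp add: power2_eq_square field_simps)
  moreover have "en^2 < (e/3)^2" using h by (intro power_strict_mono) auto
  then have "en^2 < e^2/9" by (simp add: power_divide)
  moreover have "e^2 > 0" using h by simp
  ultimately have "D^2 < e^2" by linarith
  then show "D < e" using h by (smt (verit) power_mono)
qed
lemma arith5: "Fx' - Fx < et \<Longrightarrow> Fx' - Fy - l/2*P \<le> Fx - Fy - l/2*Q + (et + l/2*(Q - P))" for l::real
  by (simp add: field_simps)

lemma phi_le:
  assumes "i \<in> {1..m}"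
  shows "phi l F m x y \<le> F i x - F i y - (l / 2) * (norm (x - y))^2"
  unfolding phi_def using assms by (intro Min_le) auto

lemma norm_mid:
  fixes x a b :: "real^'n"
  shows "(norm (x - ((1/2) *\<^sub>R a + (1/2) *\<^sub>R b)))^2 =
     ((norm (x - a))^2 + (norm (x - b))^2) / 2 - (norm (a - b))^2 / 4"
  unfolding power2_norm_eq_inner
  apply (simp add: inner_diff_left inner_diff_right inner_add_left inner_add_right inner_commute algebra_simps)
  apply (simp add: field_simps)
  done

lemma norm_four:
  fixes x x' y y' :: "real^'n"
  shows "(norm (x - y'))^2 - (norm (x' - y'))^2 + (norm (x' - y))^2 - (norm (x - y))^2
     = 2 * inner (x - x') (y - y')"
  unfolding power2_norm_eq_inner
  by (simp add: inner_diff_left inner_diff_right inner_commute algebra_simps)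

context
  fixes S :: "(real^'n) set" and F :: "nat \<Rightarrow> real^'n \<Rightarrow> real" and m :: nat and l :: real
  assumes ne: "S \<noteq> {}" and cl: "closed S" and cv: "convex S"
    and m1: "m \<ge> 1"
    and cont: "\<And>i. i \<in> {1..m} \<Longrightarrow> continuous_on S (F i)"
    and cvx: "\<And>i. i \<in> {1..m} \<Longrightarrow> convex_on S (F i)"
    and lpos: "l > 0"
begin

lemma phi_cont: "continuous_on S (phi l F m x)"
  unfolding phi_def
  by (intro cont_Min_fin continuous_intros cont) (use m1 in auto)

lemma phi_self: "phi l F m x x = 0"
proof -
  have "(\<lambda>i. F i x - F i x - l / 2 * (norm (x - x))\<^sup>2) ` {1..m} = {0}"
    using m1 by auto
  then show ?thesis unfolding phi_def by simp
qed

lemma coercive: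
  assumes x: "x \<in> S"
  shows "\<exists>R>0. \<forall>y\<in>S. norm (y - x) > R \<longrightarrow> phi l F m x y < 0"
proof -
  define C where "C = S \<inter> cball x 1"
  have cC: "compact C" unfolding C_def using cl by (intro closed_Int_compact) auto
  have c1: "continuous_on C (\<lambda>z. F 1 z - F 1 x)"
    using cont[of 1] m1 unfolding C_def
    by (intro continuous_intros) (auto intro: continuous_on_subset)
  have "bounded ((\<lambda>z. F 1 z - F 1 x) ` C)"
    by (intro compact_imp_bounded compact_continuous_image c1 cC)
  then obtain M0 where M0: "\<forall>z\<in>C. \<bar>F 1 z - F 1 x\<bar> \<le> M0"
    unfolding bounded_real by auto
  define M where "M = max M0 0"
  have M: "\<forall>z\<in>C. \<bar>F 1 z - F 1 x\<bar> \<le> M" "M \<ge> 0" using M0 unfolding M_def by force+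
  define R where "R = 2 * M / l + 1"
  have R1: "R \<ge> 1" unfolding R_def using M lpos by simp
  show ?thesis
  proof (intro exI[of _ R] conjI ballI impI)
    show "R > 0" using R1 by simp
    fix y assume y: "y \<in> S" and r: "norm (y - x) > R"
    define r where "r = norm (y - x)"
    have rR: "r > R" "r > 0" using r R1 unfolding r_def by auto
    define z where "z = (1 - 1 / r) *\<^sub>R x + (1 / r) *\<^sub>R y"
    have zS: "z \<in> S" unfolding z_def using cv x y rR R1
      by (intro convexD) (auto simp: field_simps)
    have "z - x = (1 / r) *\<^sub>R (y - x)" unfolding z_def by (simp add: algebra_simps)
    then have "norm (z - x) = 1" using rR unfolding r_def by simp
    then have "z \<in> C" unfolding C_def using zS by (simp add: dist_norm norm_minus_commute)
    then have Fz: "F 1 z \<ge> F 1 x - M" using M by force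
    have "F 1 z \<le> (1 - 1 / r) * F 1 x + (1 / r) * F 1 y"
      unfolding z_def using cvx[of 1] m1 x y rR R1
      by (intro convex_onD) auto
    then have "r * F 1 z \<le> r * ((1 - 1 / r) * F 1 x + (1 / r) * F 1 y)"
      using rR by (intro mult_left_mono) auto
    then have "r * F 1 z \<le> (r - 1) * F 1 x + F 1 y"
      using rR by (simp add: algebra_simps)
    moreover have "r * F 1 z \<ge> r * (F 1 x - M)" using Fz rR by (intro mult_left_mono) auto
    ultimately have Fy: "F 1 x - F 1 y \<le> r * M" by (simp add: algebra_simps)
    have "M < l * r / 2" using rR lpos unfolding R_def by (simp add: field_simps)
    then have "r * M < r * (l * r / 2)" using rR by simp
    then have "F 1 x - F 1 y - l / 2 * r^2 < 0" using Fy by (simp add: power2_eq_square algebra_simps)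
    moreover have "phi l F m x y \<le> F 1 x - F 1 y - l / 2 * (norm (x - y))^2"
      using m1 by (intro phi_le) auto
    ultimately show "phi l F m x y < 0"
      unfolding r_def by (simp add: norm_minus_commute)
  qed
qed

lemma exists_max:
  assumes x: "x \<in> S"
  shows "\<exists>y\<in>S. \<forall>z\<in>S. phi l F m x z \<le> phi l F m x y"
proof -
  obtain R where R: "R > 0" "\<forall>y\<in>S. norm (y - x) > R \<longrightarrow> phi l F m x y < 0"
    using coercive[OF x] by auto
  define K where "K = S \<inter> cball x R"
  have "compact K" unfolding K_def using cl by (intro closed_Int_compact) auto
  moreover have "K \<noteq> {}" using x R unfolding K_def by auto
  moreover have "continuous_on K (phi l F m x)"
    using phi_cont unfolding K_def by (rule continuous_on_subset) auto
  ultimately obtain y where y: "y \<in> K" "\<forall>z\<in>K. phi l F m x z \<le> phi l F m x y"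
    using continuous_attains_sup by blast
  have xK: "x \<in> K" using x R unfolding K_def by auto
  show ?thesis
  proof (intro bexI ballI)
    show "y \<in> S" using y unfolding K_def by auto
    fix z assume z: "z \<in> S"
    show "phi l F m x z \<le> phi l F m x y"
    proof (cases "z \<in> K")
      case True then show ?thesis using y by auto
    next
      case False
      then have "norm (z - x) > R" using z unfolding K_def by (auto simp: dist_norm norm_minus_commute)
      then have "phi l F m x z < 0" using R z by auto
      also have "0 = phi l F m x x" using phi_self by simp
      also have "\<dots> \<le> phi l F m x y" using y xK by auto
      finally show ?thesis by simp
    qed
  qed
qed

lemma phi_mid:
  assumes a: "a \<in> S" and b: "b \<in> S"
  shows "(phi l F m x a + phi l F m x b) / 2 + l / 8 * (norm (a - b))^2
     \<le> phi l F m x ((1/2) *\<^sub>R a + (1/2) *\<^sub>R b)"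
proof -
  let ?c = "(1/2) *\<^sub>R a + (1/2) *\<^sub>R b"
  have "\<forall>i\<in>{1..m}. (phi l F m x a + phi l F m x b) / 2 + l / 8 * (norm (a - b))^2
      \<le> F i x - F i ?c - l / 2 * (norm (x - ?c))^2"
  proof
    fix i assume i: "i \<in> {1..m}"
    have pa: "phi l F m x a \<le> F i x - F i a - l / 2 * (norm (x - a))^2" using i by (rule phi_le)
    have pb: "phi l F m x b \<le> F i x - F i b - l / 2 * (norm (x - b))^2" using i by (rule phi_le)
    have "F i ((1 - 1/2) *\<^sub>R a + (1/2) *\<^sub>R b) \<le> (1 - 1/2) * F i a + (1/2) * F i b"
      using cvx[OF i] a b by (intro convex_onD) auto
    then have fc: "F i ?c \<le> (F i a + F i b) / 2" by simp
    have nm: "(norm (x - ?c))^2 = ((norm (x - a))^2 + (norm (x - b))^2) / 2 - (norm (a - b))^2 / 4"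
      by (rule norm_mid)
    show "(phi l F m x a + phi l F m x b) / 2 + l / 8 * (norm (a - b))^2
      \<le> F i x - F i ?c - l / 2 * (norm (x - ?c))^2"
      unfolding nm using pa pb fc by (rule arith1)
  qed
  then show ?thesis unfolding phi_def[of l F m x ?c] using m1 by simp
qed

lemma qgrowth:
  assumes y: "y \<in> S" and ymax: "\<forall>z\<in>S. phi l F m x z \<le> phi l F m x y" and z: "z \<in> S"
  shows "phi l F m x z + l / 4 * (norm (z - y))^2 \<le> phi l F m x y"
proof -
  have "(1/2) *\<^sub>R y + (1/2) *\<^sub>R z \<in> S" using cv y z by (intro convexD) auto
  then have "phi l F m x ((1/2) *\<^sub>R y + (1/2) *\<^sub>R z) \<le> phi l F m x y" using ymax by auto
  moreover have "(phi l F m x y + phi l F m x z) / 2 + l / 8 * (norm (y - z))^2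
     \<le> phi l F m x ((1/2) *\<^sub>R y + (1/2) *\<^sub>R z)" using y z by (rule phi_mid)
  ultimately show ?thesis using arith2 by (metis norm_minus_commute)
qed

lemma U_char:
  assumes x: "x \<in> S"
  shows "U_fun l F m S x \<in> S \<and> (\<forall>z\<in>S. phi l F m x z \<le> phi l F m x (U_fun l F m S x))"
proof -
  obtain y where y: "y \<in> S" "\<forall>z\<in>S. phi l F m x z \<le> phi l F m x y" using exists_max[OF x] by auto
  have "U_fun l F m S x = y"
    unfolding U_fun_def
  proof (rule the_equality)
    show "y \<in> S \<and> (\<forall>z\<in>S. phi l F m x z \<le> phi l F m x y)" using y by auto
    fix y' assume y': "y' \<in> S \<and> (\<forall>z\<in>S. phi l F m x z \<le> phi l F m x y')"
    have "phi l F m x y + l / 4 * (norm (y - y'))^2 \<le> phi l F m x y'"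
      using qgrowth[of y' x y] y y' by auto
    moreover have "phi l F m x y' \<le> phi l F m x y" using y y' by auto
    ultimately have "l / 4 * (norm (y - y'))^2 \<le> 0" by simp
    then have "(norm (y - y'))^2 \<le> 0" using lpos by (simp add: mult_le_0_iff)
    then show "y' = y" by simp
  qed
  then show ?thesis using y by simp
qed

lemma u_eq:
  assumes x: "x \<in> S"
  shows "u_fun l F m S x = phi l F m x (U_fun l F m S x)"
  unfolding u_fun_def using U_char[OF x]
  by (intro cSup_eq_maximum) auto

lemma U_cont: "continuous_on S (U_fun l F m S)"
  unfolding continuous_on_iff
proof (intro ballI allI impI)
  fix x and e :: real assume x: "x \<in> S" and e: "e > 0"
  define et where "et = l*e^2/32"
  have et: "et > 0" using lpos e by (simp add: et_def)
  have "\<forall>i\<in>{1..m}. eventually (\<lambda>x'. dist (F i x') (F i x) < et) (at x within S)"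
  proof
    fix i assume i: "i\<in>{1..m}"
    have "(F i \<longlongrightarrow> F i x) (at x within S)" using cont[OF i] x unfolding continuous_on_def by auto
    then show "eventually (\<lambda>x'. dist (F i x') (F i x) < et) (at x within S)" using et tendsto_iff by blast
  qed
  then have "eventually (\<lambda>x'. \<forall>i\<in>{1..m}. dist (F i x') (F i x) < et) (at x within S)"
    by (intro eventually_ball_finite) auto
  then obtain d1 where d1: "d1 > 0"
    "\<forall>x'\<in>S. x' \<noteq> x \<and> dist x' x < d1 \<longrightarrow> (\<forall>i\<in>{1..m}. dist (F i x') (F i x) < et)"
    unfolding eventually_at by blast
  show "\<exists>d>0. \<forall>x'\<in>S. dist x' x < d \<longrightarrow> dist (U_fun l F m S x') (U_fun l F m S x) < e"
  proof (intro exI[of _ "min d1 (e/3)"] conjI ballI impI)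
    show "min d1 (e/3) > 0" using d1 e by simp
    fix x' assume x': "x' \<in> S" and dx: "dist x' x < min d1 (e/3)"
    show "dist (U_fun l F m S x') (U_fun l F m S x) < e"
    proof (cases "x' = x")
      case True then show ?thesis using e by simp
    next
      case False
      have Fi: "\<forall>i\<in>{1..m}. \<bar>F i x' - F i x\<bar> < et" using d1 x' dx False by (auto simp: dist_real_def)
      define y where "y = U_fun l F m S x"
      define y' where "y' = U_fun l F m S x'"
      have y: "y \<in> S" "\<forall>z\<in>S. phi l F m x z \<le> phi l F m x y" using U_char[OF x] unfolding y_def by auto
      have y': "y' \<in> S" "\<forall>z\<in>S. phi l F m x' z \<le> phi l F m x' y'" using U_char[OF x'] unfolding y'_def by auto
      have A: "phi l F m x y' + l/4 * (norm (y - y'))^2 \<le> phi l F m x y"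
        using qgrowth[OF y(1) y(2) y'(1)] by (simp add: norm_minus_commute)
      have B: "phi l F m x' y + l/4 * (norm (y - y'))^2 \<le> phi l F m x' y'"
        using qgrowth[OF y'(1) y'(2) y(1)] by simp
      have C: "phi l F m x' y' \<le> phi l F m x y' + et + l/2*((norm (x - y'))^2 - (norm (x' - y'))^2)"
        unfolding phi_def add.assoc
      proof (rule Min_le_shift)
        fix i assume i: "i \<in> {1..m}"
        have "\<bar>F i x' - F i x\<bar> < et" using Fi i by blast
        then have "F i x' - F i x < et" by (simp add: abs_less_iff)
        then show "F i x' - F i y' - l / 2 * (norm (x' - y'))\<^sup>2
          \<le> F i x - F i y' - l / 2 * (norm (x - y'))\<^sup>2 + (et + l/2*((norm (x - y'))^2 - (norm (x' - y'))^2))"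
          by (rule arith5)
      qed (use m1 in auto)
      have D: "phi l F m x y \<le> phi l F m x' y + et + l/2*((norm (x' - y))^2 - (norm (x - y))^2)"
        unfolding phi_def add.assoc
      proof (rule Min_le_shift)
        fix i assume i: "i \<in> {1..m}"
        have "\<bar>F i x' - F i x\<bar> < et" using Fi i by blast
        then have "F i x - F i x' < et" by (simp add: abs_less_iff)
        then show "F i x - F i y - l / 2 * (norm (x - y))\<^sup>2
          \<le> F i x' - F i y - l / 2 * (norm (x' - y))\<^sup>2 + (et + l/2*((norm (x' - y))^2 - (norm (x - y))^2))"
          by (rule arith5)
      qed (use m1 in auto)
      have N: "(norm (x - y'))^2 - (norm (x' - y'))^2 + (norm (x' - y))^2 - (norm (x - y))^2
          = 2 * inner (x - x') (y - y')" by (rule norm_four)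
      have I: "inner (x - x') (y - y') \<le> norm (x - x') * norm (y - y')" by (rule norm_cauchy_schwarz)
      have S: "l/2 * (norm (y - y'))^2 \<le> 2 * et + l * (norm (x - x') * norm (y - y'))"
        by (rule arith3[OF A B C D N I lpos refl])
      have en: "norm (x - x') < e/3" using dx by (simp add: dist_norm norm_minus_commute)
      have "norm (y - y') < e"
        by (rule arith4[OF lpos e _ en _ S[unfolded et_def]]) auto
      then show ?thesis unfolding y_def y'_def by (simp add: dist_norm norm_minus_commute)
    qed
  qed
qed

end



theorem theorem3p4:
  fixes S :: "(real^'n) set" and F :: "nat \<Rightarrow> real^'n \<Rightarrow> real" and m :: nat and l :: real
  assumes "S \<noteq> {}" and "closed S" and "convex S"
    and "m \<ge> 1"
    and "\<And>i. i \<in> {1..m} \<Longrightarrow> continuous_on S (F i)"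
    and "\<And>i. i \<in> {1..m} \<Longrightarrow> convex_on S (F i)"
    and "l > 0"
  shows "continuous_on S (u_fun l F m S) \<and> continuous_on S (U_fun l F m S)"
proof
  have U: "continuous_on S (U_fun l F m S)" by (rule U_cont[where S=S and F=F and m=m and l=l, OF assms])
  show "continuous_on S (U_fun l F m S)" by (rule U)
  have US: "U_fun l F m S ` S \<subseteq> S" using U_char[where S=S and F=F and m=m and l=l, OF assms] by auto
  have "continuous_on S (\<lambda>x. phi l F m x (U_fun l F m S x))"
    unfolding phi_def
  proof (intro cont_Min_fin)
    fix i assume i: "i \<in> {1..m}"
    have "continuous_on S (\<lambda>x. F i (U_fun l F m S x))"
      by (rule continuous_on_compose2[OF assms(5)[OF i] U US])
    then show "continuous_on S (\<lambda>x. F i x - F i (U_fun l F m S x) - l / 2 * (norm (x - U_fun l F m S x))\<^sup>2)"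
      using assms(5)[OF i] U by (intro continuous_intros) auto
  qed (use assms(4) in auto)
  then show "continuous_on S (u_fun l F m S)"
    using u_eq[where S=S and F=F and m=m and l=l, OF assms] continuous_on_cong by (smt (verit))
qed

end
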